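(* Let $g>0$ and consider the one-dimensional shallow water system $$\partial_t h+\partial_x q=0,\qquad \partial_t q+\partial_x\Big(\frac{q^2}{h}+\tfrac12 g h^2\Big)=0,$$ with state $u=(h,q)$, $h>0$, $q=hv$. Let $u_l=(h_l,q_l)$ and $u_r=(h_r,q_r)$ be subcritical states, i.e. $|\mathcal{F}_l|<1$ and $|\mathcal{F}_r|<1$, where $\mathcal{F}=v/\sqrt{gh}$. Then there exists a unique pair of states $u_1^b=(h_1^b,q_1^b)$, $u_2^b=(h_2^b,q_2^b)$ with $h_1^b,h_2^b>0$ such that $$u_1^b\in\mathcal{N}(u_l),\qquad u_2^b\in\mathcal{P}(u_r),\qquad q_1^b=q_2^b,\qquad h_1^b=h_2^b.$$
   Context: This models a junction between one incoming canal (canal 1, initial constant state $u_l$) and one outgoing canal (canal 2, initial constant state $u_r$), with conservation of mass $q_1^b=q_2^b$ and equal water heights $h_1^b=h_2^b$ at the junction. The Froude number of a state $(h,q)$ is $\mathcal{F}=v/\sqrt{gh}=q/(h\sqrt{gh})$; a state is subcritical (fluvial) if $|\mathcal{F}|<1$ and supercritical (torrential) if $|\mathcal{F}|>1$. Riemann problems for the system are solved in the standard (Lax) sense, by a 1-wave and a 2-wave, each an admissible shock or a centered rarefaction (eigenvalues $\lambda_{1,2}=v\mp\sqrt{gh}$). For a state $u_l$, $\mathcal{N}(u_l)$ is the set of states $\hat u$ such that the solution of the Riemann problem with left state $u_l$ (for $x<0$) and right state $\hat u$ (for $x>0$) contains only waves with non-positive speed. For a state $u_r$, $\mathcal{P}(u_r)$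 is the set of states $\tilde u$ such that the solution of the Riemann problem with left state $\tilde u$ and right state $u_r$ contains only waves with non-negative speed. *)

theory Defs
  imports Complex_Main
begin

text \<open>States of the shallow water system are pairs u = (h, q) of water height h and
  discharge q = h v.  The gravity constant g is a parameter.\<close>

type_synonym state = "real \<times> real"

definition vel :: "state \<Rightarrow> real" where
  "vel u = snd u / fst u"

definition celerity :: "real \<Rightarrow> state \<Rightarrow> real" where
  "celerity g u = sqrt (g * fst u)"

definition lam1 :: "real \<Rightarrow> state \<Rightarrow> real" where
  "lam1 g u = vel u - celerity g u"

definition lam2 :: "real \<Rightarrow> state \<Rightarrow> real" where
  "lam2 g u = vel u + celerity g u"

definition froude :: "real \<Rightarrow> state \<Rightarrow> real" where
  "froude g u = snd u / (fst u * sqrt (g * fst u))"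

definition subcritical :: "real \<Rightarrow> state \<Rightarrow> bool" where
  "subcritical g u \<longleftrightarrow> fst u > 0 \<and> \<bar>froude g u\<bar> < 1"

text \<open>Second component of the flux  f(h,q) = (q, q^2/h + g h^2/2).\<close>
definition flux_q :: "real \<Rightarrow> state \<Rightarrow> real" where
  "flux_q g u = (snd u)\<^sup>2 / fst u + g * (fst u)\<^sup>2 / 2"

definition RH :: "real \<Rightarrow> state \<Rightarrow> state \<Rightarrow> real \<Rightarrow> bool" where
  "RH g ul ur s \<longleftrightarrow> s * (fst ur - fst ul) = snd ur - snd ul
                  \<and> s * (snd ur - snd ul) = flux_q g ur - flux_q g ul"

definition shock1 :: "real \<Rightarrow> state \<Rightarrow> state \<Rightarrow> real \<Rightarrow> bool" where
  "shock1 g ul ur s \<longleftrightarrow> RH g ul ur s \<and> lam1 g ur < s \<and> s < lam1 g ul \<and> s < lam2 g ur"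

definition shock2 :: "real \<Rightarrow> state \<Rightarrow> state \<Rightarrow> real \<Rightarrow> bool" where
  "shock2 g ul ur s \<longleftrightarrow> RH g ul ur s \<and> lam2 g ur < s \<and> s < lam2 g ul \<and> lam1 g ul < s"

text \<open>Centered rarefactions: ul and ur lie on the same integral curve of the
  corresponding eigenvector field (constancy of the corresponding Riemann invariant)
  and the eigenvalue increases from left to right.\<close>
definition rare1 :: "real \<Rightarrow> state \<Rightarrow> state \<Rightarrow> bool" where
  "rare1 g ul ur \<longleftrightarrow> vel ul + 2 * celerity g ul = vel ur + 2 * celerity g ur
                    \<and> lam1 g ul < lam1 g ur"

definition rare2 :: "real \<Rightarrow> state \<Rightarrow> state \<Rightarrow> bool" where
  "rare2 g ul ur \<longleftrightarrow> vel ul - 2 * celerity g ul = vel ur - 2 * celerity g ur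
                    \<and> lam2 g ul < lam2 g ur"

text \<open>A k-wave joining ul to ur, together with the set S of speeds it occupies
  (empty when the wave is trivial).\<close>
definition wave1 :: "real \<Rightarrow> state \<Rightarrow> state \<Rightarrow> real set \<Rightarrow> bool" where
  "wave1 g ul ur S \<longleftrightarrow> (ur = ul \<and> S = {})
     \<or> (\<exists>s. shock1 g ul ur s \<and> S = {s})
     \<or> (rare1 g ul ur \<and> S = {lam1 g ul .. lam1 g ur})"

definition wave2 :: "real \<Rightarrow> state \<Rightarrow> state \<Rightarrow> real set \<Rightarrow> bool" where
  "wave2 g ul ur S \<longleftrightarrow> (ur = ul \<and> S = {})
     \<or> (\<exists>s. shock2 g ul ur s \<and> S = {s})
     \<or> (rare2 g ul ur \<and> S = {lam2 g ul .. lam2 g ur})"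

definition riemann_sol :: "real \<Rightarrow> state \<Rightarrow> state \<Rightarrow> state \<Rightarrow> real set \<Rightarrow> real set \<Rightarrow> bool" where
  "riemann_sol g ul ur um S1 S2 \<longleftrightarrow> fst ul > 0 \<and> fst ur > 0 \<and> fst um > 0
      \<and> wave1 g ul um S1 \<and> wave2 g um ur S2"

definition Nset :: "real \<Rightarrow> state \<Rightarrow> state set" where
  "Nset g ul = {u. \<exists>um S1 S2. riemann_sol g ul u um S1 S2 \<and> (\<forall>s \<in> S1 \<union> S2. s \<le> 0)}"

definition Pset :: "real \<Rightarrow> state \<Rightarrow> state set" where
  "Pset g ur = {u. \<exists>um S1 S2. riemann_sol g u ur um S1 S2 \<and> (\<forall>s \<in> S1 \<union> S2. s \<ge> 0)}"

end

theory Submission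
  imports Defs
begin

lemma cel_pos: "g > 0 \<Longrightarrow> fst u > 0 \<Longrightarrow> celerity g u > 0"
  by (simp add: celerity_def)

lemma cel_sq: "g > 0 \<Longrightarrow> fst u > 0 \<Longrightarrow> (celerity g u)\<^sup>2 = g * fst u"
  by (simp add: celerity_def)

lemma lam_lt: "g > 0 \<Longrightarrow> fst u > 0 \<Longrightarrow> lam1 g u < lam2 g u"
  using cel_pos[of g u] by (simp add: lam1_def lam2_def)

lemma subcrit: assumes "g > 0" "subcritical g u"
  shows "fst u > 0" "\<bar>vel u\<bar> < celerity g u" "lam1 g u < 0" "lam2 g u > 0"
proof -
  show h: "fst u > 0" using assms by (simp add: subcritical_def)
  have c: "celerity g u > 0" using cel_pos[OF assms(1) h] .
  have "froude g u = vel u / celerity g u"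
    by (simp add: froude_def vel_def celerity_def)
  then have "\<bar>vel u / celerity g u\<bar> < 1" using assms by (simp add: subcritical_def)
  then show v: "\<bar>vel u\<bar> < celerity g u" using c by (simp add: abs_divide divide_less_eq)
  show "lam1 g u < 0" "lam2 g u > 0" using v by (auto simp: lam1_def lam2_def)
qed

lemma RH_m:
  assumes "RH g a b s" "fst a > 0" "fst b > 0" "fst a \<noteq> fst b"
  shows "snd a - s*fst a = snd b - s*fst b \<and> (snd a - s*fst a)\<^sup>2 = g*fst a*fst b*(fst a+fst b)/2"
proof -
  obtain ha qa hb qb where ab: "a = (ha,qa)" "b = (hb,qb)" by (cases a, cases b)
  define m where "m = qa - s*ha"
  have e1: "s*(hb-ha) = qb - qa" and e2: "s*(qb-qa) = qb\<^sup>2/hb + g*hb\<^sup>2/2 - (qa\<^sup>2/ha + g*ha\<^sup>2/2)"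
    using assms(1) by (auto simp: RH_def flux_q_def ab)
  have qa: "qa = m + s*ha" by (simp add: m_def)
  have qb: "qb = m + s*hb" using e1 by (simp add: m_def algebra_simps)
  have hpos: "ha > 0" "hb > 0" "ha \<noteq> hb" using assms ab by auto
  have "s*(s*(hb-ha)) = (m + s*hb)\<^sup>2/hb + g*hb\<^sup>2/2 - ((m + s*ha)\<^sup>2/ha + g*ha\<^sup>2/2)"
    using e2 e1 qa qb by simp
  then have "s*(s*(hb-ha))*(ha*hb) = ((m + s*hb)\<^sup>2/hb + g*hb\<^sup>2/2 - ((m + s*ha)\<^sup>2/ha + g*ha\<^sup>2/2))*(ha*hb)"
    by simp
  then have E: "ha * (hb * (hb * (m * (m * 4)))) + g * (ha * (ha * (ha * (ha * (hb * (hb * 2)))))) =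
      ha * (ha * (hb * (m * (m * 4)))) + g * (ha * (ha * (hb * (hb * (hb * (hb * 2))))))"
    using hpos by (simp add: field_simps power2_eq_square)
  have "(m\<^sup>2 - g*ha*hb*(ha+hb)/2) * (ha - hb) * (4*ha*hb) = 0"
    using E unfolding power2_eq_square by algebra
  then have "0 = (m\<^sup>2 - g*ha*hb*(ha+hb)/2) * (ha - hb)" using hpos by simp
  then have "m\<^sup>2 = g*ha*hb*(ha+hb)/2" using hpos by simp
  then show ?thesis using qb by (simp add: ab m_def)
qed

lemma RH_intro:
  assumes "ha > 0" "hb > 0" "m\<^sup>2 = g*ha*hb*(ha+hb)/2"
  shows "RH g (ha, m + s*ha) (hb, m + s*hb) s"
proof -
  have X: "(m + s*hb)\<^sup>2/hb + g*hb\<^sup>2/2 - ((m + s*ha)\<^sup>2/ha + g*ha\<^sup>2/2)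
        = s*s*(hb-ha) + (m\<^sup>2*(ha-hb)/(ha*hb) + g*(hb\<^sup>2-ha\<^sup>2)/2)"
    using assms by (simp add: field_simps power2_eq_square)
  have Z: "m\<^sup>2*(ha-hb)/(ha*hb) + g*(hb\<^sup>2-ha\<^sup>2)/2 = 0"
    using assms by (simp add: field_simps power2_eq_square)
  have "s * (m + s*hb - (m + s*ha)) = (m + s*hb)\<^sup>2/hb + g*hb\<^sup>2/2 - ((m + s*ha)\<^sup>2/ha + g*ha\<^sup>2/2)"
    unfolding X Z by (simp add: algebra_simps)
  then show ?thesis by (simp add: RH_def flux_q_def algebra_simps)
qed

definition Dsh :: "real \<Rightarrow> real \<Rightarrow> real \<Rightarrow> real" where
  "Dsh g a h = (h - a) * sqrt (g*h*a*(h+a)/2) / (h*a)"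

definition phi :: "real \<Rightarrow> state \<Rightarrow> real \<Rightarrow> real" where
  "phi g ul h = vel ul + 2*celerity g ul - 2*sqrt(g*min h (fst ul)) - Dsh g (fst ul) (max h (fst ul))"

definition psi :: "real \<Rightarrow> state \<Rightarrow> real \<Rightarrow> real" where
  "psi g ur h = vel ur - 2*celerity g ur + 2*sqrt(g*min h (fst ur)) + Dsh g (fst ur) (max h (fst ur))"

lemma Dsh_same[simp]: "Dsh g a a = 0" by (simp add: Dsh_def)

lemma Dsh_nonneg: "g \<ge> 0 \<Longrightarrow> a > 0 \<Longrightarrow> a \<le> h \<Longrightarrow> Dsh g a h \<ge> 0"
  by (simp add: Dsh_def)

lemma Dsh_sq: "g \<ge> 0 \<Longrightarrow> a > 0 \<Longrightarrow> h > 0 \<Longrightarrow> (Dsh g a h)\<^sup>2 = g*(h-a)\<^sup>2*(h+a)/(2*h*a)"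
  by (simp add: Dsh_def power_mult_distrib power_divide field_simps power2_eq_square)

lemma key_ineq:
  fixes a x y :: real
  assumes "0 < a" "a \<le> x" "x < y"
  shows "(x-a)\<^sup>2*(x+a)/x < (y-a)\<^sup>2*(y+a)/y"
proof -
  have ex: "(x-a)\<^sup>2*(x+a)/x = (x\<^sup>2-a\<^sup>2)*(1-a/x)" using assms by (simp add: field_simps power2_eq_square)
  have ey: "(y-a)\<^sup>2*(y+a)/y = (y\<^sup>2-a\<^sup>2)*(1-a/y)" using assms by (simp add: field_simps power2_eq_square)
  have x0: "0 \<le> x\<^sup>2-a\<^sup>2" using assms by (simp add: power_mono)
  have xy: "x\<^sup>2-a\<^sup>2 < y\<^sup>2-a\<^sup>2" using assms by (simp add: power_strict_mono)
  have d: "a/y \<le> a/x" using assms by (simp add: divide_left_mono)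
  have p: "0 < 1 - a/y" using assms by simp
  have "(x\<^sup>2-a\<^sup>2)*(1-a/x) \<le> (x\<^sup>2-a\<^sup>2)*(1-a/y)" using x0 d by (simp add: mult_left_mono)
  also have "\<dots> < (y\<^sup>2-a\<^sup>2)*(1-a/y)" using xy p by (simp add: mult_strict_right_mono)
  finally show ?thesis using ex ey by simp
qed

lemma Dsh_mono: assumes "g > 0" "a > 0" "a \<le> x" "x < y" shows "Dsh g a x < Dsh g a y"
proof -
  have "(Dsh g a x)\<^sup>2 < (Dsh g a y)\<^sup>2"
  proof -
    have "g/(2*a) * ((x-a)\<^sup>2*(x+a)/x) < g/(2*a) * ((y-a)\<^sup>2*(y+a)/y)"
      using key_ineq[OF assms(2-4)] assms by (intro mult_strict_left_mono) auto
    moreover have "\<And>h. h > 0 \<Longrightarrow> (Dsh g a h)\<^sup>2 = g/(2*a) * ((h-a)\<^sup>2*(h+a)/h)"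
      using assms by (simp add: Dsh_sq ac_simps)
    ultimately show ?thesis using assms by simp
  qed
  then show ?thesis using Dsh_nonneg[of g a y] assms by (auto intro: power_less_imp_less_base)
qed

lemma Dsh_mono_le: "g > 0 \<Longrightarrow> a > 0 \<Longrightarrow> a \<le> x \<Longrightarrow> x \<le> y \<Longrightarrow> Dsh g a x \<le> Dsh g a y"
  using Dsh_mono[of g a x y] by (cases "x = y") auto

lemma phi_le: "h \<le> fst ul \<Longrightarrow> phi g ul h = vel ul + 2*celerity g ul - 2*sqrt(g*h)"
  by (simp add: phi_def)
lemma phi_ge: "fst ul \<le> h \<Longrightarrow> phi g ul h = vel ul - Dsh g (fst ul) h"
  by (simp add: phi_def celerity_def)
lemma psi_le: "h \<le> fst ur \<Longrightarrow> psi g ur h = vel ur - 2*celerity g ur + 2*sqrt(g*h)"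
  by (simp add: psi_def)
lemma psi_ge: "fst ur \<le> h \<Longrightarrow> psi g ur h = vel ur + Dsh g (fst ur) h"
  by (simp add: psi_def celerity_def)

lemma phi_decr: assumes "g > 0" "fst ul > 0" "0 < a" "a < b" shows "phi g ul b < phi g ul a"
proof -
  let ?l = "fst ul"
  have s1: "sqrt(g*min a ?l) \<le> sqrt(g*min b ?l)" using assms by (simp add: min_def)
  have d1: "Dsh g ?l (max a ?l) \<le> Dsh g ?l (max b ?l)" using assms by (intro Dsh_mono_le) auto
  show ?thesis
  proof (cases "a < ?l")
    case True
    have "sqrt(g*min a ?l) < sqrt(g*min b ?l)" using assms True by (simp add: min_def)
    then show ?thesis using d1 unfolding phi_def by linarith
  next
    case False
    have "Dsh g ?l (max a ?l) < Dsh g ?l (max b ?l)" using assms False by (intro Dsh_mono) auto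
    then show ?thesis using s1 unfolding phi_def by linarith
  qed
qed

lemma psi_incr: assumes "g > 0" "fst ur > 0" "0 < a" "a < b" shows "psi g ur a < psi g ur b"
proof -
  let ?l = "fst ur"
  have s1: "sqrt(g*min a ?l) \<le> sqrt(g*min b ?l)" using assms by (simp add: min_def)
  have d1: "Dsh g ?l (max a ?l) \<le> Dsh g ?l (max b ?l)" using assms by (intro Dsh_mono_le) auto
  show ?thesis
  proof (cases "a < ?l")
    case True
    have "sqrt(g*min a ?l) < sqrt(g*min b ?l)" using assms True by (simp add: min_def)
    then show ?thesis using d1 unfolding psi_def by linarith
  next
    case False
    have "Dsh g ?l (max a ?l) < Dsh g ?l (max b ?l)" using assms False by (intro Dsh_mono) auto
    then show ?thesis using s1 unfolding psi_def by linarith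
  qed
qed

lemma Dsh_cont: "a > 0 \<Longrightarrow> continuous_on S (\<lambda>h. Dsh g a (max h a))"
  unfolding Dsh_def
  by (intro continuous_intros) (auto simp: max_def)

lemma phi_cont: "fst ul > 0 \<Longrightarrow> continuous_on S (phi g ul)"
  unfolding phi_def
  by (intro continuous_intros Dsh_cont)

lemma psi_cont: "fst ur > 0 \<Longrightarrow> continuous_on S (psi g ur)"
  unfolding psi_def
  by (intro continuous_intros Dsh_cont)

lemma state_eq: "fst a = fst b \<Longrightarrow> vel a = vel b \<Longrightarrow> fst a > 0 \<Longrightarrow> a = b"
  by (cases a, cases b) (simp add: vel_def)

lemma ineq1: fixes a h :: real shows "0 < a \<Longrightarrow> a < h \<Longrightarrow> a*(h+a) < 2*h\<^sup>2"
proof -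
  assume "0 < a" "a < h"
  then have "a*h < h*h" "a*a < h*h" by (simp_all add: mult_strict_mono)
  then show ?thesis by (simp add: algebra_simps power2_eq_square)
qed

lemma ineq2: fixes a h :: real shows "0 < a \<Longrightarrow> a < h \<Longrightarrow> 2*a\<^sup>2 < h*(h+a)"
proof -
  assume "0 < a" "a < h"
  then have "a*a < h*h" "a*a < h*a" by (simp_all add: mult_strict_mono)
  then show ?thesis by (simp add: algebra_simps power2_eq_square)
qed

lemma ineq3: fixes a h :: real shows "0 < a \<Longrightarrow> 0 < h \<Longrightarrow> 2*a\<^sup>2 < h*(h+a) \<Longrightarrow> a < h"
proof (rule ccontr)
  assume "0 < a" "0 < h" "2*a\<^sup>2 < h*(h+a)" "\<not> a < h"
  then have "h*h \<le> a*a" "h*a \<le> a*a" by (simp_all add: mult_mono)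
  then show False using \<open>2*a\<^sup>2 < h*(h+a)\<close> by (simp add: algebra_simps power2_eq_square)
qed

lemma W1_char:
  assumes g: "g > 0" and hl: "fst ul > 0" and h: "fst u > 0" and w: "wave1 g ul u S"
  shows "vel u = phi g ul (fst u)"
proof -
  obtain hl ql where ul: "ul = (hl, ql)" by (cases ul)
  obtain h q where u: "u = (h, q)" by (cases u)
  have hl0: "hl > 0" and h0: "h > 0" using hl h ul u by auto
  consider (triv) "u = ul" | (sh) s where "shock1 g ul u s" | (ra) "rare1 g ul u"
    using w unfolding wave1_def by blast
  then show ?thesis
  proof cases
    case triv
    then show ?thesis by (simp add: phi_le celerity_def)
  next
    case sh
    have RH: "RH g ul u s" and l1: "lam1 g u < s" and l2: "s < lam1 g ul"
      using sh by (auto simp: shock1_def)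
    have ne: "hl \<noteq> h"
    proof
      assume "hl = h"
      then have "u = ul" using RH ul u by (simp add: RH_def)
      then show False using l1 l2 by simp
    qed
    define m where "m = ql - s*hl"
    have mm: "m = q - s*h" and m2: "m\<^sup>2 = g*hl*h*(hl+h)/2"
      using RH_m[OF RH] hl0 h0 ne ul u by (auto simp: m_def)
    have cl0: "sqrt (g*hl) \<ge> 0" using g hl0 by simp
    have "ql/hl - m/hl = s" using hl0 by (simp add: m_def field_simps)
    then have mhl: "sqrt (g*hl) < m/hl" using l2 ul by (simp add: lam1_def vel_def celerity_def)
    then have "(sqrt (g*hl))\<^sup>2 < (m/hl)\<^sup>2" using cl0 by (intro power_strict_mono) auto
    then have "g*hl < m\<^sup>2/hl\<^sup>2" using g hl0 by (simp add: power_divide)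
    then have "g*hl*hl\<^sup>2 < m\<^sup>2" using hl0 by (simp add: field_simps)
    then have "g*(2*hl\<^sup>2)*hl < g*(h*(h+hl))*hl" using m2 by (simp add: algebra_simps power2_eq_square)
    then have "2*hl\<^sup>2 < h*(h+hl)" using g hl0 by simp
    then have hgt: "hl < h" using ineq3 hl0 h0 by blast
    have m0: "m > 0" using mhl hl0 cl0 by (smt (verit) divide_nonpos_pos)
    have msq: "m = sqrt (g*h*hl*(h+hl)/2)"
      using m2 m0 by (intro real_sqrt_unique[symmetric]) (auto simp: ac_simps)
    have "phi g ul h = ql/hl - (h-hl)*m/(h*hl)"
      using hgt ul by (simp add: phi_ge Dsh_def msq vel_def)
    also have "\<dots> = q/h"
    proof -
      have qv: "q = m + s*h" "ql = m + s*hl" using mm m_def by auto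
      show ?thesis unfolding qv using hl0 h0 by (simp add: field_simps)
    qed
    finally show ?thesis using u by (simp add: vel_def)
  next
    case ra
    then have e: "ql/hl + 2*sqrt(g*hl) = q/h + 2*sqrt(g*h)" and lt: "ql/hl - sqrt(g*hl) < q/h - sqrt(g*h)"
      using ul u by (auto simp: rare1_def lam1_def vel_def celerity_def)
    have "sqrt(g*h) < sqrt(g*hl)" using e lt by linarith
    then have "h < hl" using g by simp
    then show ?thesis using e ul u by (simp add: phi_le vel_def celerity_def)
  qed
qed

lemma W1_exist:
  assumes g: "g > 0" and hl: "fst ul > 0" and h: "h > 0"
  shows "\<exists>S. wave1 g ul (h, h*phi g ul h) S \<and> (\<forall>s\<in>S. s \<le> max (lam1 g ul) (lam1 g (h, h*phi g ul h)))"
proof -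
  obtain hl ql where ul: "ul = (hl, ql)" by (cases ul)
  have hl0: "hl > 0" using hl ul by auto
  consider "h = hl" | "h < hl" | "hl < h" by linarith
  then show ?thesis
  proof cases
    case 1
    then have "(h, h*phi g ul h) = ul" using ul hl0 by (simp add: phi_le celerity_def vel_def)
    then show ?thesis unfolding wave1_def by (intro exI[of _ "{}"]) auto
  next
    case 2
    let ?u = "(h, h*phi g ul h)"
    have v: "vel ?u = vel ul + 2*celerity g ul - 2*sqrt(g*h)" using 2 h ul by (simp add: phi_le vel_def)
    have "sqrt(g*h) < sqrt(g*hl)" using 2 g by simp
    moreover have "celerity g ?u = sqrt(g*h)" "celerity g ul = sqrt(g*hl)" using ul by (simp_all add: celerity_def)
    ultimately have "rare1 g ul ?u" using v unfolding rare1_def lam1_def by linarith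
    then show ?thesis unfolding wave1_def by (intro exI[of _ "{lam1 g ul..lam1 g ?u}"]) auto
  next
    case 3
    define M where "M = sqrt(g*h*hl*(h+hl)/2)"
    define s where "s = ql/hl - M/hl"
    have M2: "M\<^sup>2 = g*h*hl*(h+hl)/2" using g h hl0 by (simp add: M_def)
    have M0: "M \<ge> 0" using g h hl0 by (simp add: M_def)
    have "s*hl = ql - M" using hl0 unfolding s_def by (simp add: field_simps)
    then have e1: "(hl, M + s*hl) = ul" using ul by simp
    have ph: "phi g ul h = ql/hl - (h-hl)*M/(h*hl)" using 3 ul by (simp add: phi_ge Dsh_def M_def vel_def)
    have "M + s*h = h*(ql/hl - (h-hl)*M/(h*hl))" using h hl0 unfolding s_def by (simp add: field_simps)
    then have e2: "(h, M + s*h) = (h, h*phi g ul h)" using ph by simp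
    have RH: "RH g (hl, M + s*hl) (h, M + s*h) s"
      by (rule RH_intro) (use hl0 h M2 in \<open>auto simp: ac_simps\<close>)
    have vu: "vel (h, M + s*h) = s + M/h" using h by (simp add: vel_def field_simps)
    have a1: "M/h < sqrt(g*h)"
    proof (rule real_less_rsqrt)
      have "hl*(h+hl) < 2*h\<^sup>2" using ineq1 hl0 3 by blast
      then have "g*h/2*(hl*(h+hl)) < g*h/2*(2*h\<^sup>2)" using g h by (intro mult_strict_left_mono) auto
      moreover have "g*h/2*(hl*(h+hl)) = g*h*hl*(h+hl)/2" "g*h/2*(2*h\<^sup>2) = g*h*h\<^sup>2" by (simp_all add: algebra_simps)
      ultimately have "g*h*hl*(h+hl)/2 < g*h*h\<^sup>2" by linarith
      then show "(M/h)\<^sup>2 < g*h" using h M2 by (simp add: power_divide field_simps power2_eq_square)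
    qed
    have a2: "sqrt(g*hl) < M/hl"
    proof (rule real_less_lsqrt)
      show "0 \<le> M/hl" using M0 hl0 by simp
      have "2*hl\<^sup>2 < h*(h+hl)" using ineq2 hl0 3 by blast
      then have "g*hl/2*(2*hl\<^sup>2) < g*hl/2*(h*(h+hl))" using g hl0 by (intro mult_strict_left_mono) auto
      moreover have "g*hl/2*(2*hl\<^sup>2) = g*hl*hl\<^sup>2" "g*hl/2*(h*(h+hl)) = g*h*hl*(h+hl)/2" by (simp_all add: algebra_simps)
      ultimately have "g*hl*hl\<^sup>2 < g*h*hl*(h+hl)/2" by linarith
      then show "g*hl < (M/hl)\<^sup>2" using hl0 M2 by (simp add: power_divide field_simps power2_eq_square)
    qed
    have l1: "lam1 g (h, M + s*h) < s" using vu a1 by (simp add: lam1_def celerity_def)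
    have l2: "s < lam1 g (hl, M + s*hl)" using a2 e1 ul by (simp add: lam1_def celerity_def vel_def s_def)
    have "0 < M/h + sqrt(g*h)" using M0 h g by (simp add: add_nonneg_pos)
    then have l3: "s < lam2 g (h, M + s*h)" using vu by (simp add: lam2_def celerity_def)
    have "shock1 g ul (h, h*phi g ul h) s" using RH l1 l2 l3 e1 e2 by (simp add: shock1_def)
    moreover have "s \<le> lam1 g ul" using l2 e1 by simp
    ultimately show ?thesis unfolding wave1_def by (intro exI[of _ "{s}"]) auto
  qed
qed

lemma W2_char:
  assumes g: "g > 0" and hr: "fst ur > 0" and h: "fst u > 0" and w: "wave2 g u ur S"
  shows "vel u = psi g ur (fst u)"
proof -
  obtain hr qr where ur: "ur = (hr, qr)" by (cases ur)
  obtain h q where u: "u = (h, q)" by (cases u)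
  have hr0: "hr > 0" and h0: "h > 0" using hr h ur u by auto
  consider (triv) "ur = u" | (sh) s where "shock2 g u ur s" | (ra) "rare2 g u ur"
    using w unfolding wave2_def by blast
  then show ?thesis
  proof cases
    case triv
    then show ?thesis by (simp add: psi_le celerity_def)
  next
    case sh
    have RH: "RH g u ur s" and l1: "lam2 g ur < s" and l2: "s < lam2 g u"
      using sh by (auto simp: shock2_def)
    have ne: "h \<noteq> hr"
    proof
      assume "h = hr"
      then have "u = ur" using RH ur u by (simp add: RH_def)
      then show False using l1 l2 by simp
    qed
    define m where "m = q - s*h"
    have mm: "m = qr - s*hr" and m2: "m\<^sup>2 = g*h*hr*(h+hr)/2"
      using RH_m[OF RH] hr0 h0 ne ur u by (auto simp: m_def)
    define n where "n = - m"
    have n2: "n\<^sup>2 = g*h*hr*(h+hr)/2" using m2 by (simp add: n_def)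
    have cl0: "sqrt (g*hr) \<ge> 0" using g hr0 by simp
    have "qr/hr + n/hr = s" using hr0 by (simp add: n_def mm field_simps)
    then have mhl: "sqrt (g*hr) < n/hr" using l1 ur by (simp add: lam2_def vel_def celerity_def)
    then have "(sqrt (g*hr))\<^sup>2 < (n/hr)\<^sup>2" using cl0 by (intro power_strict_mono) auto
    then have "g*hr < n\<^sup>2/hr\<^sup>2" using g hr0 by (simp add: power_divide)
    then have "g*hr*hr\<^sup>2 < n\<^sup>2" using hr0 by (simp add: field_simps)
    then have "g*(2*hr\<^sup>2)*hr < g*(h*(h+hr))*hr" using n2 by (simp add: algebra_simps power2_eq_square)
    then have "2*hr\<^sup>2 < h*(h+hr)" using g hr0 by simp
    then have hgt: "hr < h" using ineq3 hr0 h0 by blast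
    have n0: "n > 0" using mhl hr0 cl0 by (smt (verit) divide_nonpos_pos)
    have nsq: "n = sqrt (g*h*hr*(h+hr)/2)"
      using n2 n0 by (intro real_sqrt_unique[symmetric]) (auto simp: ac_simps)
    have "psi g ur h = qr/hr + (h-hr)*n/(h*hr)"
      using hgt ur by (simp add: psi_ge Dsh_def nsq vel_def)
    also have "\<dots> = q/h"
    proof -
      have qv: "q = s*h - n" "qr = s*hr - n" using mm m_def n_def by auto
      show ?thesis unfolding qv using hr0 h0 by (simp add: field_simps)
    qed
    finally show ?thesis using u by (simp add: vel_def)
  next
    case ra
    then have e: "q/h - 2*sqrt(g*h) = qr/hr - 2*sqrt(g*hr)" and lt: "q/h + sqrt(g*h) < qr/hr + sqrt(g*hr)"
      using ur u by (auto simp: rare2_def lam2_def vel_def celerity_def)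
    have "sqrt(g*h) < sqrt(g*hr)" using e lt by linarith
    then have "h < hr" using g by simp
    then show ?thesis using e ur u by (simp add: psi_le vel_def celerity_def)
  qed
qed

lemma W2_exist:
  assumes g: "g > 0" and hr: "fst ur > 0" and h: "h > 0"
  shows "\<exists>S. wave2 g (h, h*psi g ur h) ur S \<and> (\<forall>s\<in>S. s \<ge> min (lam2 g (h, h*psi g ur h)) (lam2 g ur))"
proof -
  obtain hr qr where ur: "ur = (hr, qr)" by (cases ur)
  have hr0: "hr > 0" using hr ur by auto
  consider "h = hr" | "h < hr" | "hr < h" by linarith
  then show ?thesis
  proof cases
    case 1
    then have "(h, h*psi g ur h) = ur" using ur hr0 by (simp add: psi_le celerity_def vel_def)
    then show ?thesis unfolding wave2_def by (intro exI[of _ "{}"]) auto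
  next
    case 2
    let ?u = "(h, h*psi g ur h)"
    have v: "vel ?u = vel ur - 2*celerity g ur + 2*sqrt(g*h)" using 2 h ur by (simp add: psi_le vel_def)
    have "sqrt(g*h) < sqrt(g*hr)" using 2 g by simp
    moreover have "celerity g ?u = sqrt(g*h)" "celerity g ur = sqrt(g*hr)" using ur by (simp_all add: celerity_def)
    ultimately have "rare2 g ?u ur" using v unfolding rare2_def lam2_def by linarith
    then show ?thesis unfolding wave2_def by (intro exI[of _ "{lam2 g ?u..lam2 g ur}"]) auto
  next
    case 3
    define N where "N = sqrt(g*h*hr*(h+hr)/2)"
    define s where "s = qr/hr + N/hr"
    have N2: "N\<^sup>2 = g*h*hr*(h+hr)/2" using g h hr0 by (simp add: N_def)
    have N0: "N \<ge> 0" using g h hr0 by (simp add: N_def)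
    have "s*hr = qr + N" using hr0 unfolding s_def by (simp add: field_simps)
    then have e1: "(hr, - N + s*hr) = ur" using ur by simp
    have ph: "psi g ur h = qr/hr + (h-hr)*N/(h*hr)" using 3 ur by (simp add: psi_ge Dsh_def N_def vel_def)
    have "- N + s*h = h*(qr/hr + (h-hr)*N/(h*hr))" using h hr0 unfolding s_def by (simp add: field_simps)
    then have e2: "(h, - N + s*h) = (h, h*psi g ur h)" using ph by simp
    have RH: "RH g (h, - N + s*h) (hr, - N + s*hr) s"
      by (rule RH_intro) (use hr0 h N2 in \<open>auto simp: ac_simps\<close>)
    have vu: "vel (h, - N + s*h) = s - N/h" using h by (simp add: vel_def field_simps)
    have a1: "N/h < sqrt(g*h)"
    proof (rule real_less_rsqrt)
      have "hr*(h+hr) < 2*h\<^sup>2" using ineq1 hr0 3 by blast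
      then have "g*h/2*(hr*(h+hr)) < g*h/2*(2*h\<^sup>2)" using g h by (intro mult_strict_left_mono) auto
      moreover have "g*h/2*(hr*(h+hr)) = g*h*hr*(h+hr)/2" "g*h/2*(2*h\<^sup>2) = g*h*h\<^sup>2" by (simp_all add: algebra_simps)
      ultimately have "g*h*hr*(h+hr)/2 < g*h*h\<^sup>2" by linarith
      then show "(N/h)\<^sup>2 < g*h" using h N2 by (simp add: power_divide field_simps power2_eq_square)
    qed
    have a2: "sqrt(g*hr) < N/hr"
    proof (rule real_less_lsqrt)
      show "0 \<le> N/hr" using N0 hr0 by simp
      have "2*hr\<^sup>2 < h*(h+hr)" using ineq2 hr0 3 by blast
      then have "g*hr/2*(2*hr\<^sup>2) < g*hr/2*(h*(h+hr))" using g hr0 by (intro mult_strict_left_mono) auto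
      moreover have "g*hr/2*(2*hr\<^sup>2) = g*hr*hr\<^sup>2" "g*hr/2*(h*(h+hr)) = g*h*hr*(h+hr)/2" by (simp_all add: algebra_simps)
      ultimately have "g*hr*hr\<^sup>2 < g*h*hr*(h+hr)/2" by linarith
      then show "g*hr < (N/hr)\<^sup>2" using hr0 N2 by (simp add: power_divide field_simps power2_eq_square)
    qed
    have l1: "lam2 g (hr, - N + s*hr) < s" using a2 e1 ur by (simp add: lam2_def celerity_def vel_def s_def)
    have l2: "s < lam2 g (h, - N + s*h)" using vu a1 by (simp add: lam2_def celerity_def)
    have "0 < N/h + sqrt(g*h)" using N0 h g by (simp add: add_nonneg_pos)
    then have l3: "lam1 g (h, - N + s*h) < s" using vu by (simp add: lam1_def celerity_def)
    have "shock2 g (h, h*psi g ur h) ur s" using RH l1 l2 l3 e1 e2 by (simp add: shock2_def)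
    moreover have "lam2 g ur \<le> s" using l1 e1 by simp
    ultimately show ?thesis unfolding wave2_def by (intro exI[of _ "{s}"]) auto
  qed
qed

lemma wave1_rare: "wave1 g a b S \<Longrightarrow> lam1 g a < lam1 g b \<Longrightarrow> rare1 g a b"
  by (auto simp: wave1_def shock1_def)

lemma wave2_rare: "wave2 g a b S \<Longrightarrow> lam2 g a < lam2 g b \<Longrightarrow> rare2 g a b"
  by (auto simp: wave2_def shock2_def)

lemma rare1_trans: "rare1 g a b \<Longrightarrow> rare1 g b c \<Longrightarrow> rare1 g a c"
  by (auto simp: rare1_def)

lemma rare2_trans: "rare2 g a b \<Longrightarrow> rare2 g b c \<Longrightarrow> rare2 g a c"
  by (auto simp: rare2_def)

lemma rare1_wave: "rare1 g a b \<Longrightarrow> wave1 g a b {lam1 g a..lam1 g b}"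
  by (auto simp: wave1_def)

lemma rare2_wave: "rare2 g a b \<Longrightarrow> wave2 g a b {lam2 g a..lam2 g b}"
  by (auto simp: wave2_def)

lemma A_lam1: "wave1 g ul u S \<Longrightarrow> \<forall>s\<in>S. s \<le> 0 \<Longrightarrow> lam1 g ul < 0 \<Longrightarrow> lam1 g u \<le> 0"
  unfolding wave1_def shock1_def by (elim disjE exE conjE) auto

lemma A_lam2: "wave2 g u ur S \<Longrightarrow> \<forall>s\<in>S. s \<ge> 0 \<Longrightarrow> lam2 g ur > 0 \<Longrightarrow> lam2 g u \<ge> 0"
  unfolding wave2_def shock2_def by (elim disjE exE conjE) auto

lemma N_cases:
  assumes "u \<in> Nset g ul"
  shows "fst u > 0 \<and> ((\<exists>S. wave1 g ul u S \<and> (\<forall>s\<in>S. s \<le> 0)) \<or> lam2 g u < 0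
          \<or> (lam2 g u = 0 \<and> (\<exists>um S1. fst um > 0 \<and> wave1 g ul um S1 \<and> rare2 g um u)))"
proof -
  obtain um S1 S2 where r: "riemann_sol g ul u um S1 S2" and sp: "\<forall>s \<in> S1 \<union> S2. s \<le> 0"
    using assms by (auto simp: Nset_def)
  have w1: "wave1 g ul um S1" and w2: "wave2 g um u S2" and pos: "fst u > 0" "fst um > 0"
    using r by (auto simp: riemann_sol_def)
  consider (triv) "u = um" | (sh) s where "shock2 g um u s" "S2 = {s}" | (ra) "rare2 g um u" "S2 = {lam2 g um..lam2 g u}"
    using w2 unfolding wave2_def by blast
  then show ?thesis
  proof cases
    case triv then show ?thesis using w1 sp pos by auto
  next
    case sh then show ?thesis using sp pos by (auto simp: shock2_def)
  next
    case ra
    then have "lam2 g u \<le> 0" using sp by (auto simp: rare2_def)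
    show ?thesis
    proof (cases "lam2 g u = 0")
      case True then show ?thesis using ra w1 pos by blast
    next
      case False then show ?thesis using \<open>lam2 g u \<le> 0\<close> pos by simp
    qed
  qed
qed

lemma P_cases:
  assumes "u \<in> Pset g ur"
  shows "fst u > 0 \<and> ((\<exists>S. wave2 g u ur S \<and> (\<forall>s\<in>S. s \<ge> 0)) \<or> lam1 g u > 0
          \<or> (lam1 g u = 0 \<and> (\<exists>um S2. fst um > 0 \<and> rare1 g u um \<and> wave2 g um ur S2)))"
proof -
  obtain um S1 S2 where r: "riemann_sol g u ur um S1 S2" and sp: "\<forall>s \<in> S1 \<union> S2. s \<ge> 0"
    using assms by (auto simp: Pset_def)
  have w1: "wave1 g u um S1" and w2: "wave2 g um ur S2" and pos: "fst u > 0" "fst um > 0"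
    using r by (auto simp: riemann_sol_def)
  consider (triv) "um = u" | (sh) s where "shock1 g u um s" "S1 = {s}" | (ra) "rare1 g u um" "S1 = {lam1 g u..lam1 g um}"
    using w1 unfolding wave1_def by blast
  then show ?thesis
  proof cases
    case triv then show ?thesis using w2 sp pos by auto
  next
    case sh then show ?thesis using sp pos by (auto simp: shock1_def)
  next
    case ra
    then have "lam1 g u \<ge> 0" using sp by (auto simp: rare1_def)
    show ?thesis
    proof (cases "lam1 g u = 0")
      case True then show ?thesis using ra w2 pos by blast
    next
      case False then show ?thesis using \<open>lam1 g u \<ge> 0\<close> pos by simp
    qed
  qed
qed

lemma crit2_eq:
  assumes "g > 0" "fst u > 0" "fst u' > 0"
    "vel u - 2*celerity g u = vel u' - 2*celerity g u'" "lam2 g u = 0" "lam2 g u' = 0"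
  shows "u = u'"
proof -
  have "celerity g u = celerity g u'" using assms by (simp add: lam2_def)
  then have "fst u = fst u'" using assms by (simp add: celerity_def)
  moreover have "vel u = vel u'" using assms \<open>celerity g u = celerity g u'\<close> by (simp add: lam2_def)
  ultimately show ?thesis using state_eq assms by blast
qed

lemma crit1_eq:
  assumes "g > 0" "fst u > 0" "fst u' > 0"
    "vel u + 2*celerity g u = vel u' + 2*celerity g u'" "lam1 g u = 0" "lam1 g u' = 0"
  shows "u = u'"
proof -
  have "celerity g u = celerity g u'" using assms by (simp add: lam1_def)
  then have "fst u = fst u'" using assms by (simp add: celerity_def)
  moreover have "vel u = vel u'" using assms \<open>celerity g u = celerity g u'\<close> by (simp add: lam1_def)
  ultimately show ?thesis using state_eq assms by blast
qed

lemma Dsh_lower: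
  assumes "g > 0" "a > 0" "a \<le> h"
  shows "(h - a) * sqrt (g/(2*a)) \<le> Dsh g a h"
proof (rule power2_le_imp_le)
  show "0 \<le> Dsh g a h" using assms by (simp add: Dsh_nonneg)
  have h0: "h > 0" using assms by simp
  have "((h - a) * sqrt (g/(2*a)))\<^sup>2 = g*(h-a)\<^sup>2/(2*a)" using assms by (simp add: power_mult_distrib)
  also have "\<dots> = g*(h-a)\<^sup>2/(2*a) * 1" by simp
  also have "\<dots> \<le> g*(h-a)\<^sup>2/(2*a) * ((h+a)/h)" using assms h0
    by (intro mult_left_mono) auto
  also have "\<dots> = g*(h-a)\<^sup>2*(h+a)/(2*h*a)" using h0 assms by simp
  also have "\<dots> = (Dsh g a h)\<^sup>2" using assms h0 by (simp add: Dsh_sq)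
  finally show "((h - a) * sqrt (g/(2*a)))\<^sup>2 \<le> (Dsh g a h)\<^sup>2" .
qed

theorem mainTheorem1:
  fixes g :: real and ul ur :: state
  assumes "g > 0"
    and "subcritical g ul" and "subcritical g ur"
  shows "\<exists>!(u1b, u2b). fst u1b > 0 \<and> fst u2b > 0
            \<and> u1b \<in> Nset g ul \<and> u2b \<in> Pset g ur
            \<and> snd u1b = snd u2b \<and> fst u1b = fst u2b"
proof -
  have g: "g > 0" using assms by simp
  note sl = subcrit[OF g assms(2)] and sr = subcrit[OF g assms(3)]
  define hl where "hl = fst ul"
  define hr where "hr = fst ur"
  define vl where "vl = vel ul"
  define vr where "vr = vel ur"
  define cl where "cl = celerity g ul"
  define cr where "cr = celerity g ur"
  have hl0: "hl > 0" and hr0: "hr > 0" using sl sr by (simp_all add: hl_def hr_def)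
  have cl0: "cl > 0" and cr0: "cr > 0" using cel_pos g sl sr by (simp_all add: cl_def cr_def)
  have vlc: "\<bar>vl\<bar> < cl" and vrc: "\<bar>vr\<bar> < cr" using sl sr by (simp_all add: vl_def cl_def vr_def cr_def)
  have clsq: "cl = sqrt (g*hl)" and crsq: "cr = sqrt (g*hr)" by (simp_all add: cl_def cr_def celerity_def hl_def hr_def)
  define F where "F = (\<lambda>h. phi g ul h - psi g ur h)"
  have Fcont: "continuous_on {a..b} F" for a b
    unfolding F_def using phi_cont[of ul] psi_cont[of ur] sl sr by (intro continuous_on_diff) auto
  have Fdec: "F b < F a" if "0 < a" "a < b" for a b
    using phi_decr[OF g _ that, of ul] psi_incr[OF g _ that, of ur] sl sr by (simp add: F_def)
  define K where "K = vl + 2*cl - vr + 2*cr"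
  have K0: "K > 0" using vlc vrc cl0 cr0 by (simp add: K_def abs_less_iff)
  define a where "a = min (min hl hr) (K\<^sup>2/(32*g))"
  have a0: "a > 0" using hl0 hr0 K0 g by (simp add: a_def)
  have ahl: "a \<le> hl" "a \<le> hr" by (simp_all add: a_def)
  have "g*a \<le> g*(K\<^sup>2/(32*g))" using g by (intro mult_left_mono) (auto simp: a_def)
  also have "\<dots> = K\<^sup>2/32" using g by simp
  also have "\<dots> < (K/4)\<^sup>2" using K0 by (simp add: power_divide)
  finally have "sqrt (g*a) < K/4" using K0 by (intro real_less_lsqrt) auto
  moreover have "F a = K - 4*sqrt(g*a)"
    using ahl by (simp add: F_def phi_le psi_le K_def vl_def vr_def cl_def cr_def hl_def hr_def)
  ultimately have Fa: "F a \<ge> 0" by simp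
  define \<kappa> where "\<kappa> = sqrt (g/(2*hl))"
  have k0: "\<kappa> > 0" using g hl0 by (simp add: \<kappa>_def)
  define b where "b = max (max hl hr) (hl + \<bar>vl - vr\<bar>/\<kappa> + 1)"
  have bh: "hl \<le> b" "hr \<le> b" "\<bar>vl - vr\<bar>/\<kappa> + 1 \<le> b - hl" by (simp_all add: b_def)
  have "\<bar>vl - vr\<bar> + \<kappa> = (\<bar>vl - vr\<bar>/\<kappa> + 1) * \<kappa>" using k0 by (simp add: distrib_right)
  also have "(\<bar>vl - vr\<bar>/\<kappa> + 1) * \<kappa> \<le> (b - hl) * \<kappa>" using bh k0 by (intro mult_right_mono) auto
  also have "\<dots> \<le> Dsh g hl b" using Dsh_lower[OF g hl0 bh(1)] by (simp add: \<kappa>_def)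
  finally have D1: "\<bar>vl - vr\<bar> + \<kappa> \<le> Dsh g hl b" .
  have D2: "Dsh g hr b \<ge> 0" using g hr0 bh by (intro Dsh_nonneg) auto
  have "F b = vl - Dsh g hl b - (vr + Dsh g hr b)"
    using bh by (simp add: F_def phi_ge psi_ge vl_def vr_def hl_def hr_def)
  then have Fb: "F b \<le> 0" using D1 D2 k0 by linarith
  have ab: "a \<le> b" using ahl bh by simp
  obtain hX where hX: "a \<le> hX" "hX \<le> b" "F hX = 0" using IVT2'[OF Fb Fa ab Fcont] by blast
  have hX0: "hX > 0" using hX a0 by simp
  define X where "X = (hX, hX * phi g ul hX)"
  have X0: "fst X > 0" using hX0 by (simp add: X_def)
  have pp: "phi g ul hX = psi g ur hX" using hX by (simp add: F_def)
  have Xpsi: "X = (hX, hX * psi g ur hX)" using pp by (simp add: X_def)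
  obtain S1 where wX1: "wave1 g ul X S1" and sp1: "\<forall>s\<in>S1. s \<le> max (lam1 g ul) (lam1 g X)"
    using W1_exist[OF g _ hX0, of ul] sl by (auto simp: X_def)
  obtain S2 where wX2: "wave2 g X ur S2" and sp2: "\<forall>s\<in>S2. s \<ge> min (lam2 g X) (lam2 g ur)"
    using W2_exist[OF g _ hX0, of ur] sr Xpsi by auto
  have onboth: "u = X" if "fst u > 0" "vel u = phi g ul (fst u)" "vel u = psi g ur (fst u)" for u
  proof -
    have F0: "F (fst u) = 0" using that by (simp add: F_def)
    have "fst u = hX"
    proof (rule ccontr)
      assume "fst u \<noteq> hX"
      then consider "fst u < hX" | "hX < fst u" by linarith
      then show False
      proof cases
        case 1 then show ?thesis using Fdec[OF that(1) 1] F0 hX by simp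
      next
        case 2 then show ?thesis using Fdec[OF hX0 2] F0 hX by simp
      qed
    qed
    moreover have "vel u = vel X" using that hX0 \<open>fst u = hX\<close> by (simp add: X_def vel_def)
    ultimately show ?thesis using state_eq that X_def by auto
  qed
  have curveX: "um = X" if "fst um > 0" "wave1 g ul um S" "wave2 g um ur S'" for um S S'
    using onboth[OF that(1) W1_char[OF g _ that(1) that(2)] W2_char[OF g _ that(1) that(3)]] sl sr by simp
  define Good where "Good u \<longleftrightarrow> fst u > 0 \<and> u \<in> Nset g ul \<and> u \<in> Pset g ur" for u
  have U: "(u = X \<and> lam1 g X \<le> 0 \<and> 0 \<le> lam2 g X) \<or> (lam2 g X < 0 \<and> lam2 g u = 0 \<and> rare2 g X u)
        \<or> (0 < lam1 g X \<and> lam1 g u = 0 \<and> rare1 g u X)" if gu: "Good u" for u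
  proof -
    have N: "fst u > 0 \<and> ((\<exists>S. wave1 g ul u S \<and> (\<forall>s\<in>S. s \<le> 0)) \<or> lam2 g u < 0
          \<or> (lam2 g u = 0 \<and> (\<exists>um S1. fst um > 0 \<and> wave1 g ul um S1 \<and> rare2 g um u)))"
      using N_cases gu by (simp add: Good_def)
    have P: "fst u > 0 \<and> ((\<exists>S. wave2 g u ur S \<and> (\<forall>s\<in>S. s \<ge> 0)) \<or> lam1 g u > 0
          \<or> (lam1 g u = 0 \<and> (\<exists>um S2. fst um > 0 \<and> rare1 g u um \<and> wave2 g um ur S2)))"
      using P_cases gu by (simp add: Good_def)
    have u0: "fst u > 0" using N by simp
    have lt: "lam1 g u < lam2 g u" using lam_lt[OF g u0] .
    from N consider (A) S where "wave1 g ul u S" "\<forall>s\<in>S. s \<le> 0" | (B) "lam2 g u < 0"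
      | (C) um S1' where "lam2 g u = 0" "fst um > 0" "wave1 g ul um S1'" "rare2 g um u" by blast
    then show ?thesis
    proof cases
      case A
      have l1: "lam1 g u \<le> 0" using A_lam1[OF A] sl by simp
      from P consider (A') S' where "wave2 g u ur S'" "\<forall>s\<in>S'. s \<ge> 0" | (B') "lam1 g u > 0"
        | (C') um S2' where "lam1 g u = 0" "fst um > 0" "rare1 g u um" "wave2 g um ur S2'" by blast
      then show ?thesis
      proof cases
        case A'
        have "u = X" using curveX[OF u0 A(1) A'(1)] .
        moreover have "lam2 g u \<ge> 0" using A_lam2[OF A'] sr by simp
        ultimately show ?thesis using l1 by simp
      next
        case B' then show ?thesis using l1 by simp
      next
        case C'
        have "rare1 g ul u" using wave1_rare[OF A(1)] sl C' by simp
        then have "rare1 g ul um" using rare1_trans C' by blast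
        then have "um = X" using curveX[OF C'(2) rare1_wave C'(4)] by blast
        then show ?thesis using C' by (auto simp: rare1_def)
      qed
    next
      case B
      then show ?thesis
      proof -
        from P consider (A') S' where "wave2 g u ur S'" "\<forall>s\<in>S'. s \<ge> 0" | (B') "lam1 g u > 0"
          | (C') "lam1 g u = 0" by blast
        then show ?thesis
        proof cases
          case A' then show ?thesis using A_lam2[OF A'] sr B by simp
        qed (use B lt in auto)
      qed
    next
      case C
      from P consider (A') S' where "wave2 g u ur S'" "\<forall>s\<in>S'. s \<ge> 0" | (B') "lam1 g u > 0"
          | (C') "lam1 g u = 0" by blast
      then show ?thesis
      proof cases
        case A'
        have "rare2 g u ur" using wave2_rare[OF A'(1)] sr C by simp
        then have "rare2 g um ur" using rare2_trans C by blast
        then have "um = X" using curveX[OF C(2) C(3) rare2_wave] by blast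
        then show ?thesis using C by (auto simp: rare2_def)
      qed (use C lt in auto)
    qed
  qed
  have ltX: "lam1 g X < lam2 g X" using lam_lt[OF g X0] .
  have uniq: "u = u'" if "Good u" "Good u'" for u u'
  proof -
    have p: "fst u > 0" "fst u' > 0" using that by (simp_all add: Good_def)
    from U[OF that(1)] U[OF that(2)] show ?thesis
    proof (elim disjE conjE)
    qed (use ltX p g in \<open>auto simp: rare2_def rare1_def intro: crit2_eq crit1_eq\<close>)
  qed
  have ex: "\<exists>u0. Good u0"
  proof -
    consider (c1) "lam1 g X \<le> 0" "0 \<le> lam2 g X" | (c2) "lam2 g X < 0" | (c3) "lam1 g X > 0" by linarith
    then show ?thesis
    proof cases
      case c1
      have "X \<in> Nset g ul" unfolding Nset_def riemann_sol_def
        using sl X0 wX1 sp1 c1 sl by (intro CollectI exI[of _ X] exI[of _ S1] exI[of _ "{}"]) (auto simp: wave2_def)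
      moreover have "X \<in> Pset g ur" unfolding Pset_def riemann_sol_def
        using sr X0 wX2 sp2 c1 sr by (intro CollectI exI[of _ X] exI[of _ "{}"] exI[of _ S2]) (auto simp: wave1_def)
      ultimately show ?thesis using X0 Good_def by blast
    next
      case c2
      have rX: "rare2 g X ur" using wave2_rare[OF wX2] c2 sr by simp
      define c0 where "c0 = (2*cr - vr)/3"
      define h0 where "h0 = c0\<^sup>2/g"
      define u0 where "u0 = (h0, -(h0*c0))"
      have c00: "c0 > 0" using vrc cr0 by (simp add: c0_def abs_less_iff)
      have h00: "h0 > 0" using c00 g by (simp add: h0_def)
      have cel: "celerity g u0 = c0" using g c00 by (simp add: celerity_def u0_def h0_def)
      have ve: "vel u0 = - c0" using h00 by (simp add: vel_def u0_def)
      have l20: "lam2 g u0 = 0" using cel ve by (simp add: lam2_def)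
      have "vel u0 - 2*celerity g u0 = -3*c0" using cel ve by simp
      also have "\<dots> = vel ur - 2*celerity g ur" by (simp add: c0_def vr_def cr_def)
      finally have w: "vel u0 - 2*celerity g u0 = vel ur - 2*celerity g ur" .
      have r1: "rare2 g X u0" using rX w l20 c2 by (simp add: rare2_def)
      have r2: "rare2 g u0 ur" using w l20 sr by (simp add: rare2_def)
      have p0: "fst u0 > 0" using h00 by (simp add: u0_def)
      have "u0 \<in> Nset g ul" unfolding Nset_def riemann_sol_def
        using sl X0 p0 wX1 sp1 c2 ltX rare2_wave[OF r1] l20
        by (intro CollectI exI[of _ X] exI[of _ S1] exI[of _ "{lam2 g X..lam2 g u0}"]) auto
      moreover have "u0 \<in> Pset g ur" unfolding Pset_def riemann_sol_def
        using sr p0 rare2_wave[OF r2] l20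
        by (intro CollectI exI[of _ u0] exI[of _ "{}"] exI[of _ "{lam2 g u0..lam2 g ur}"]) (auto simp: wave1_def)
      ultimately show ?thesis using p0 Good_def by blast
    next
      case c3
      have rX: "rare1 g ul X" using wave1_rare[OF wX1] c3 sl by simp
      define c0 where "c0 = (vl + 2*cl)/3"
      define h0 where "h0 = c0\<^sup>2/g"
      define u0 where "u0 = (h0, h0*c0)"
      have c00: "c0 > 0" using vlc cl0 by (simp add: c0_def abs_less_iff)
      have h00: "h0 > 0" using c00 g by (simp add: h0_def)
      have cel: "celerity g u0 = c0" using g c00 by (simp add: celerity_def u0_def h0_def)
      have ve: "vel u0 = c0" using h00 by (simp add: vel_def u0_def)
      have l10: "lam1 g u0 = 0" using cel ve by (simp add: lam1_def)
      have "vel u0 + 2*celerity g u0 = 3*c0" using cel ve by simp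
      also have "\<dots> = vel ul + 2*celerity g ul" by (simp add: c0_def vl_def cl_def)
      finally have w: "vel ul + 2*celerity g ul = vel u0 + 2*celerity g u0" by simp
      have r1: "rare1 g ul u0" using w l10 sl by (simp add: rare1_def)
      have r2: "rare1 g u0 X" using rX w l10 c3 by (simp add: rare1_def)
      have p0: "fst u0 > 0" using h00 by (simp add: u0_def)
      have "u0 \<in> Nset g ul" unfolding Nset_def riemann_sol_def
        using sl p0 rare1_wave[OF r1] l10
        by (intro CollectI exI[of _ u0] exI[of _ "{lam1 g ul..lam1 g u0}"] exI[of _ "{}"]) (auto simp: wave2_def)
      moreover have "u0 \<in> Pset g ur" unfolding Pset_def riemann_sol_def
        using sr X0 p0 wX2 sp2 c3 ltX rare1_wave[OF r2] l10
        by (intro CollectI exI[of _ X] exI[of _ "{lam1 g u0..lam1 g X}"] exI[of _ S2]) auto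
      ultimately show ?thesis using p0 Good_def by blast
    qed
  qed
  then obtain u0 where gu0: "Good u0" by blast
  show ?thesis
  proof (rule ex1I[of _ "(u0, u0)"])
    show "case (u0, u0) of (u1b, u2b) \<Rightarrow> fst u1b > 0 \<and> fst u2b > 0
            \<and> u1b \<in> Nset g ul \<and> u2b \<in> Pset g ur \<and> snd u1b = snd u2b \<and> fst u1b = fst u2b"
      using gu0 by (simp add: Good_def)
  next
    fix p assume hp: "case p of (u1b, u2b) \<Rightarrow> fst u1b > 0 \<and> fst u2b > 0
            \<and> u1b \<in> Nset g ul \<and> u2b \<in> Pset g ur \<and> snd u1b = snd u2b \<and> fst u1b = fst u2b"
    obtain x y where p: "p = (x, y)" by (cases p)
    have xy: "x = y" using hp p by (auto intro: prod_eqI)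
    have "Good x" using hp p xy by (simp add: Good_def)
    then have "x = u0" using uniq gu0 by blast
    then show "p = (u0, u0)" using p xy by simp
  qed
qed

end
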